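(* Every nonempty tiling $T$ contains a dense triple, i.e. a triple of the form $(j-1)\,j\,(j+1)$ for some $2\le j\le n-1$.
   Context: Fix an integer $n\ge 3$ and write $[n]=\{1,\dots,n\}$. Let $\Lambda$ be the set of 3-element subsets of $[n]$; a triple $\{i,j,k\}$ with $i<j<k$ is written $ijk$. For a 4-element subset $F=\{i<j<k<l\}$ of $[n]$, the stick of $F$ is the sequence $(ijk,\ ijl,\ ikl,\ jkl)$. A tiling (the inversion set of a rhombus tiling of the zonogon $Z(n;2)$) is a subset $T\subseteq\Lambda$ such that for every 4-element $F\subseteq[n]$, $T\cap\mathrm{stick}(F)$ is an initial segment or a final segment of the stick (empty set and whole stick allowed). *)

theory Defs
  imports Main
begin

text \<open>Triples are 3-element subsets of [n] = {1..n}; the triple ijk with i<j<k is the set {i,j,k}.\<close>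

definition triples :: "nat \<Rightarrow> nat set set" where
  "triples n = {S. S \<subseteq> {1..n} \<and> card S = 3}"

definition stick :: "nat \<Rightarrow> nat \<Rightarrow> nat \<Rightarrow> nat \<Rightarrow> nat set list" where
  "stick i j k l = [{i,j,k}, {i,j,l}, {i,k,l}, {j,k,l}]"

definition initial_or_final :: "nat set list \<Rightarrow> nat set set \<Rightarrow> bool" where
  "initial_or_final xs A \<longleftrightarrow>
     (\<exists>m\<le>length xs. A = set (take m xs) \<or> A = set (drop m xs))"

definition tiling :: "nat \<Rightarrow> nat set set \<Rightarrow> bool" where
  "tiling n T \<longleftrightarrow> T \<subseteq> triples n \<and>
     (\<forall>i j k l. 1 \<le> i \<and> i < j \<and> j < k \<and> k < l \<and> l \<le> n \<longrightarrow>
        initial_or_final (stick i j k l) (T \<inter> set (stick i j k l)))"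

end

theory Submission
  imports Defs
begin

lemma seg4:
  assumes "initial_or_final [a,b,c,d] A" "A \<noteq> {}"
  shows "a \<in> A \<or> d \<in> A"
proof -
  obtain m where m0: "m \<le> length [a,b,c,d]" and
     m2: "A = set (take m [a,b,c,d]) \<or> A = set (drop m [a,b,c,d])"
    using assms(1) unfolding initial_or_final_def by (elim exE conjE)
  have m1: "m \<le> 4" using m0 by simp
  note m = m1 m2
  show ?thesis
  proof (cases "A = set (take m [a,b,c,d])")
    case True
    then have "m \<noteq> 0" using assms(2) by auto
    then have "a \<in> set (take m [a,b,c,d])" by (cases m) auto
    then show ?thesis using True by blast
  next
    case False
    then have A: "A = set (drop m [a,b,c,d])" using m(2) by blast
    then have "m < 4" using assms(2) m(1) by (cases "m = 4") auto
    then have "d \<in> set (drop m [a,b,c,d])"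
    proof -
      have "m = 0 \<or> m = 1 \<or> m = 2 \<or> m = 3" using \<open>m < 4\<close> by linarith
      then show ?thesis by (elim disjE) (simp_all add: numeral_eq_Suc)
    qed
    then show ?thesis using A by blast
  qed
qed

lemma key:
  assumes t: "tiling n T"
  shows "\<forall>i j k. k - i = w \<longrightarrow> {i,j,k} \<in> T \<longrightarrow> i < j \<longrightarrow> j < k \<longrightarrow>
    (\<exists>j. 2 \<le> j \<and> j \<le> n - 1 \<and> {j - 1, j, j + 1} \<in> T)"
proof (induction w rule: less_induct)
  case (less w)
  show ?case
  proof (intro allI impI)
  fix i j k assume prems: "k - i = w" "{i,j,k} \<in> T" "i < j" "j < k"
  let ?C = "\<exists>j. 2 \<le> j \<and> j \<le> n - 1 \<and> {j - 1, j, j + 1} \<in> T"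
  have IH: "\<And>a b c. c - a < k - i \<Longrightarrow> {a,b,c} \<in> T \<Longrightarrow> a < b \<Longrightarrow> b < c \<Longrightarrow>
    (\<exists>j. 2 \<le> j \<and> j \<le> n - 1 \<and> {j - 1, j, j + 1} \<in> T)"
    using less.IH prems(1) by blast
  have sub: "T \<subseteq> triples n" and st: "\<And>i j k l. 1 \<le> i \<Longrightarrow> i < j \<Longrightarrow> j < k \<Longrightarrow> k < l \<Longrightarrow> l \<le> n \<Longrightarrow>
        initial_or_final (stick i j k l) (T \<inter> set (stick i j k l))"
    using t unfolding tiling_def by auto
  have "{i,j,k} \<subseteq> {1..n}" using sub prems(2) unfolding triples_def by auto
  hence b: "1 \<le> i" "k \<le> n" by auto
  show ?C
  proof (cases "j = i + 1 \<and> k = j + 1")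
    case True
    then have "{j - 1, j, j + 1} = {i,j,k}" by auto
    then show ?C using True b prems by (intro exI[of _ j]) auto
  next
    case False
    show ?C
    proof (cases "j > i + 1")
      case True
      let ?m = "i + 1"
      have "initial_or_final [{i,?m,j},{i,?m,k},{i,j,k},{?m,j,k}] (T \<inter> set (stick i ?m j k))"
        using st[of i ?m j k] b True prems by (simp add: stick_def)
      moreover have "T \<inter> set (stick i ?m j k) \<noteq> {}" using prems by (auto simp: stick_def)
      ultimately have "{i,?m,j} \<in> T \<inter> set (stick i ?m j k) \<or> {?m,j,k} \<in> T \<inter> set (stick i ?m j k)"
        by (rule seg4)
      hence "{i,?m,j} \<in> T \<or> {?m,j,k} \<in> T" by blast
      then show ?C
      proof
        assume "{i,i + 1,j} \<in> T" thus ?C by (intro IH[where a="i" and b="i + 1" and c="j"]) (use True prems in auto)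
      next
        assume "{i + 1,j,k} \<in> T" thus ?C by (intro IH[where a="i + 1" and b="j" and c="k"]) (use True prems in auto)
      qed
    next
      case F2: False
      with False prems have kj: "k > j + 1" by auto
      let ?m = "j + 1"
      have "initial_or_final [{i,j,?m},{i,j,k},{i,?m,k},{j,?m,k}] (T \<inter> set (stick i j ?m k))"
        using st[of i j ?m k] b kj prems by (simp add: stick_def)
      moreover have "T \<inter> set (stick i j ?m k) \<noteq> {}" using prems by (auto simp: stick_def)
      ultimately have "{i,j,?m} \<in> T \<inter> set (stick i j ?m k) \<or> {j,?m,k} \<in> T \<inter> set (stick i j ?m k)"
        by (rule seg4)
      hence "{i,j,?m} \<in> T \<or> {j,?m,k} \<in> T" by blast
      then show ?C
      proof
        assume "{i,j,j + 1} \<in> T" thus ?C by (intro IH[where a="i" and b="j" and c="j + 1"]) (use kj prems in auto)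
      next
        assume "{j,j + 1,k} \<in> T" thus ?C by (intro IH[where a="j" and b="j + 1" and c="k"]) (use kj prems in auto)
      qed
    qed
  qed
  qed
qed

lemma ord3:
  fixes x y z :: nat
  assumes "x \<noteq> y" "y \<noteq> z" "x \<noteq> z"
  shows "\<exists>i j k. i < j \<and> j < k \<and> {x,y,z} = {i,j,k}"
proof -
  consider "x<y" "y<z" | "x<z" "z<y" | "y<x" "x<z" | "y<z" "z<x" | "z<x" "x<y" | "z<y" "y<x"
    using assms by linarith
  then show ?thesis
  proof cases
    case 1 then show ?thesis by (intro exI[of _ x] exI[of _ y] exI[of _ z]) auto
  next
    case 2 then show ?thesis by (intro exI[of _ x] exI[of _ z] exI[of _ y]) auto
  next
    case 3 then show ?thesis by (intro exI[of _ y] exI[of _ x] exI[of _ z]) auto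
  next
    case 4 then show ?thesis by (intro exI[of _ y] exI[of _ z] exI[of _ x]) auto
  next
    case 5 then show ?thesis by (intro exI[of _ z] exI[of _ x] exI[of _ y]) auto
  next
    case 6 then show ?thesis by (intro exI[of _ z] exI[of _ y] exI[of _ x]) auto
  qed
qed

theorem lemma3:
  fixes n :: nat and T :: "nat set set"
  assumes "n \<ge> 3" and "tiling n T" and "T \<noteq> {}"
  shows "\<exists>j. 2 \<le> j \<and> j \<le> n - 1 \<and> {j - 1, j, j + 1} \<in> T"
proof -
  obtain S where S: "S \<in> T" using assms(3) by auto
  hence "card S = 3" using assms(2) unfolding tiling_def triples_def by auto
  then obtain x y z where xyz: "S = {x,y,z}" "x \<noteq> y" "y \<noteq> z" "x \<noteq> z"
    by (auto simp: card_3_iff)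
  have "\<exists>i j k. i < j \<and> j < k \<and> S = {i,j,k}" using ord3 xyz by blast
  then obtain i j k where "i < j" "j < k" "S = {i,j,k}" by blast
  then show ?thesis using key[OF assms(2), of "k - i"] S by blast
qed

end
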